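(* If $W$ is a non-empty null-homotopic closed walk, then at least two segments of $W$ are retractable.
   Context: A closed walk in a simple graph is a cyclic sequence $u_1,\ldots,u_m$ of vertices with $u_iu_{i+1}$ an edge for $i<m$ and $u_mu_1$ an edge. A segment is a cyclically consecutive triple $u_iu_{i+1}u_{i+2}$ (indices mod $m$); it is retractable if $u_i=u_{i+2}$, and deleting $u_{i+1}$ and $u_{i+2}$ is a one-step retraction (for a closed walk of length two the result is the empty walk). The topological retract is obtained by performing one-step retractions as long as possible (it is unique). A closed walk is null-homotopic if its topological retract is empty. *)

theory Defs
  imports Main
begin

text \<open>A simple graph is given by a symmetric, irreflexive edge relation E.
  A closed walk u_1,...,u_m is represented by the list [u_1,...,u_m];
  positions are taken cyclically (mod m).\<close>

definition simple_graph :: "('a \<Rightarrow> 'a \<Rightarrow> bool) \<Rightarrow> bool" where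
  "simple_graph E \<longleftrightarrow> (\<forall>x y. E x y \<longrightarrow> E y x) \<and> (\<forall>x. \<not> E x x)"

definition closed_walk :: "('a \<Rightarrow> 'a \<Rightarrow> bool) \<Rightarrow> 'a list \<Rightarrow> bool" where
  "closed_walk E w \<longleftrightarrow>
     (\<forall>i < length w. E (w ! i) (w ! ((i + 1) mod length w)))"

text \<open>The segment starting at position i is w!i, w!(i+1), w!(i+2) (indices mod m);
  it is retractable iff its first and last vertex coincide.\<close>

definition retractable_segment :: "'a list \<Rightarrow> nat \<Rightarrow> bool" where
  "retractable_segment w i \<longleftrightarrow>
     i < length w \<and> w ! i = w ! ((i + 2) mod length w)"

text \<open>One-step retraction at a retractable segment i: delete the vertices at
  positions (i+1) mod m and (i+2) mod m.  For m = 2 this gives the empty walk.\<close>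

definition one_step_retraction :: "'a list \<Rightarrow> 'a list \<Rightarrow> bool" where
  "one_step_retraction w w' \<longleftrightarrow>
     (\<exists>i. 2 \<le> length w \<and> retractable_segment w i \<and>
        w' = map (\<lambda>j. w ! j)
               (filter (\<lambda>j. j \<noteq> (i + 1) mod length w \<and> j \<noteq> (i + 2) mod length w)
                  [0..<length w]))"

text \<open>The topological retract is obtained by performing one-step retractions
  as long as possible (it is unique); the walk is null-homotopic iff it is empty,
  i.e. iff some sequence of one-step retractions reaches the empty walk
  (the empty walk admits no further retraction).\<close>

definition null_homotopic :: "'a list \<Rightarrow> bool" where
  "null_homotopic w \<longleftrightarrow> one_step_retraction\<^sup>*\<^sup>* w []"

end

theory Submission imports Defs begin

lemma filt1:
  assumes "i + 2 < m"
  shows "filter (\<lambda>j. j \<noteq> (i + 1) mod m \<and> j \<noteq> (i + 2) mod m) [0..<m] = [0..<i+1] @ [i+3..<m]"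
proof -
  have "[0..<m] = [0..<i+1] @ [i+1..<m]" using assms
    using upt_add_eq_append[of 0 "i+1" "m - (i+1)"] by simp
  also have "[i+1..<m] = (i+1) # (i+2) # [i+3..<m]" using assms
    by (simp add: upt_conv_Cons numeral_3_eq_3)
  finally have e: "[0..<m] = [0..<i+1] @ (i+1) # (i+2) # [i+3..<m]" .
  have m1: "(i+1) mod m = i+1" "(i+2) mod m = i+2" using assms by auto
  show ?thesis unfolding e m1 by (auto intro!: filter_True)
qed

lemma filt2:
  assumes "i + 2 = m"
  shows "filter (\<lambda>j. j \<noteq> (i + 1) mod m \<and> j \<noteq> (i + 2) mod m) [0..<m] = [1..<m-1]"
proof -
  have e: "[0..<m] = 0 # [1..<m-1] @ [m-1]"
  proof -
    have a: "[0..<m] = [0..<m-1] @ [m-1]" using assms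
      by (metis add_2_eq_Suc' diff_Suc_1 upt_Suc_append zero_le)
    have b: "[0..<m-1] = 0 # [1..<m-1]" using assms by (simp add: upt_conv_Cons)
    show ?thesis using a b by simp
  qed
  have m1: "(i+1) mod m = m-1" "(i+2) mod m = 0" using assms by auto
  show ?thesis unfolding e m1 using assms by (auto intro!: filter_True)
qed

lemma filt3:
  assumes "i + 1 = m" "2 \<le> m"
  shows "filter (\<lambda>j. j \<noteq> (i + 1) mod m \<and> j \<noteq> (i + 2) mod m) [0..<m] = [2..<m]"
proof -
  have e: "[0..<m] = 0 # 1 # [2..<m]" using assms
    by (simp add: upt_conv_Cons numeral_2_eq_2)
  have m1: "(i+1) mod m = 0" "(i+2) mod m = 1" using assms
    by (auto simp: mod_Suc)
  show ?thesis unfolding e m1 using assms by (auto intro!: filter_True)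
qed

lemma modl: "(a::nat) < 2*n \<Longrightarrow> a mod n = (if a < n then a else a - n)"
  by (simp add: le_mod_geq)

lemma retr_char:
  assumes "one_step_retraction w w'" "length w \<ge> 3"
  obtains i p where "retractable_segment w i" "length w' = length w - 2" "p < length w'"
   "\<forall>t < length w'. w'!((p+t) mod length w') = w!((i+2+t) mod length w)"
proof -
  define m where "m = length w"
  obtain i where r: "retractable_segment w i" and w': "w' = map (\<lambda>j. w ! j)
               (filter (\<lambda>j. j \<noteq> (i + 1) mod m \<and> j \<noteq> (i + 2) mod m) [0..<m])"
    using assms(1) unfolding one_step_retraction_def m_def by blast
  have im: "i < m" and ri: "w!i = w!((i+2) mod m)" using r unfolding retractable_segment_def m_def by auto
  have m3: "m \<ge> 3" using assms(2) m_def by simp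
  consider "i + 2 < m" | "i + 2 = m" | "i + 1 = m" using im by linarith
  then show ?thesis
  proof cases
    case 1
    have w'e: "w' = map (\<lambda>j. w ! j) ([0..<i+1] @ [i+3..<m])" using w' filt1[OF 1] by simp
    have len: "length w' = m - 2" using w'e 1 by simp
    have nth: "w'!j = (if j < i+1 then w!j else w!(j+2))" if "j < m - 2" for j
      using that 1 unfolding w'e by (auto simp: nth_append less_Suc_eq)
    have "\<forall>t < length w'. w'!((i+t) mod length w') = w!((i+2+t) mod m)"
    proof (intro allI impI)
      fix t assume t: "t < length w'"
      show "w'!((i+t) mod length w') = w!((i+2+t) mod m)"
      proof (cases "i + t < m - 2")
        case True
        then have a: "(i+t) mod length w' = i + t" using len by simp
        have b: "(i+2+t) mod m = i+2+t" using True by simp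
        show ?thesis unfolding a b using nth[OF True] True ri 1 by (cases t) auto
      next
        case False
        then have a: "(i+t) mod length w' = i + t - (m-2)" using len t 1 modl[of "i+t" "m-2"] by simp
        have b: "(i+2+t) mod m = i+t-(m-2)" using False t len 1 modl[of "i+2+t" m] by simp
        have c1: "i+t-(m-2) < m-2" "i+t-(m-2) < i+1" using False t len 1 by linarith+
        show ?thesis unfolding a b using nth[OF c1(1)] c1(2) by simp
      qed
    qed
    then show ?thesis using that[OF r, of i] len 1 m_def by simp
  next
    case 2
    have w'e: "w' = map (\<lambda>j. w ! j) [1..<m-1]" using w' filt2[OF 2] by simp
    have len: "length w' = m - 2" using w'e 2 by simp
    have nth: "w'!j = w!(j+1)" if "j < m - 2" for j
      using that 2 unfolding w'e by auto
    have "\<forall>t < length w'. w'!((m-3+t) mod length w') = w!((i+2+t) mod m)"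
    proof (intro allI impI)
      fix t assume t: "t < length w'"
      show "w'!((m-3+t) mod length w') = w!((i+2+t) mod m)"
      proof (cases t)
        case 0
        have "Suc (m-3) = i" using 2 m3 by simp
        then show ?thesis using nth[of "m-3"] len 2 ri m3 0 by simp
      next
        case (Suc s)
        have e: "m-3+t = s + (m-2)" using Suc m3 by simp
        have a: "(m-3+t) mod length w' = s" unfolding e len using Suc t len
          by (simp only: mod_add_self2) simp
        have b: "(i+2+t) mod m = t" using 2 t len by simp
        show ?thesis unfolding a b using nth[of s] Suc t len by simp
      qed
    qed
    then show ?thesis using that[OF r, of "m-3"] len m3 m_def by simp
  next
    case 3
    have w'e: "w' = map (\<lambda>j. w ! j) [2..<m]" using w' filt3[OF 3] m3 by simp
    have len: "length w' = m - 2" using w'e by simp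
    have nth: "w'!j = w!(j+2)" if "j < m - 2" for j
      using that unfolding w'e by auto
    have "\<forall>t < length w'. w'!((m-3+t) mod length w') = w!((i+2+t) mod m)"
    proof (intro allI impI)
      fix t assume t: "t < length w'"
      show "w'!((m-3+t) mod length w') = w!((i+2+t) mod m)"
      proof (cases t)
        case 0
        have "m-3+2 = i" using 3 m3 by simp
        then show ?thesis using nth[of "m-3"] len 3 ri m3 0 by simp
      next
        case (Suc s)
        have e: "m-3+t = s + (m-2)" using Suc m3 by simp
        have a: "(m-3+t) mod length w' = s" unfolding e len using Suc t len
          by (simp only: mod_add_self2) simp
        have b: "(i+2+t) mod m = t + 1" using 3 t len modl[of "i+2+t" m] by simp
        show ?thesis unfolding a b using nth[of s] Suc t len by simp
      qed
    qed
    then show ?thesis using that[OF r, of "m-3"] len m3 m_def by simp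
  qed
qed

definition RS :: "'a list \<Rightarrow> nat set" where
  "RS w = {i. i < length w \<and> retractable_segment w i}"

lemma RS_finite: "finite (RS w)" unfolding RS_def by simp

lemma core:
  assumes r: "retractable_segment w i" and len: "length w' = length w - 2" and p: "p < length w'"
    and H: "\<forall>t < length w'. w'!((p+t) mod length w') = w!((i+2+t) mod length w)"
    and c: "card (RS w') \<ge> 2"
  shows "card (RS w) \<ge> 2"
proof -
  define m where "m = length w"
  define n where "n = length w'"
  have im: "i < m" and ri: "w!i = w!((i+2) mod m)" using r unfolding retractable_segment_def m_def by auto
  have n0: "n > 0" using p unfolding n_def by linarith
  have mn: "m = n + 2" using len n0 unfolding m_def n_def by simp
  have "\<exists>s\<in>RS w'. s \<noteq> (p + n - 1) mod n"
  proof (rule ccontr)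
    assume "\<not> ?thesis"
    then have "RS w' \<subseteq> {(p + n - 1) mod n}" by auto
    then have "card (RS w') \<le> card {(p + n - 1) mod n}" by (intro card_mono) simp_all
    then have "card (RS w') \<le> 1" by simp
    then show False using c by simp
  qed
  then obtain s where sS: "s \<in> RS w'" and sj: "s \<noteq> (p + n - 1) mod n" by blast
  have sn: "s < n" and rs: "w'!s = w'!((s+2) mod n)"
    using sS unfolding RS_def retractable_segment_def n_def by auto
  define t where "t = (if p \<le> s then s - p else s + n - p)"
  have tn: "t < n" using sn p n_def t_def by auto
  have pts: "(p + t) mod n = s" using sn p n_def t_def modl[of "p+t" n] by auto
  have tj: "t \<noteq> n - 1"
  proof
    assume "t = n - 1"
    then have "p + t = p + n - 1" using n0 by simp
    then show False using pts sj by simp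
  qed
  then have t2: "t + 2 \<le> n" using tn by simp
  define k where "k = (i+2+t) mod m"
  have km: "k < m" using mn k_def by simp
  have wk: "w!k = w'!s" using H tn pts unfolding k_def m_def n_def by metis
  have k2: "(k + 2) mod m = (i + 2 + (t + 2)) mod m" unfolding k_def by (simp only: mod_add_left_eq) (simp add: algebra_simps)
  have s2: "(s + 2) mod n = (p + (t + 2)) mod n" unfolding pts[symmetric] by (simp only: mod_add_left_eq) (simp add: algebra_simps)
  have rk: "w!k = w!((k+2) mod m)"
  proof (cases "t + 2 < n")
    case True
    have "w!((k+2) mod m) = w'!((s+2) mod n)" unfolding k2 s2 using H[rule_format, of "t+2"] True unfolding m_def n_def by simp
    then show ?thesis using wk rs by simp
  next
    case False
    then have tt: "t + 2 = n" using t2 by simp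
    have e: "i + 2 + (t + 2) = i + m" using tt mn by simp
    have a: "(k+2) mod m = i" unfolding k2 e using im by simp
    have b: "(s+2) mod n = p" unfolding s2 tt using p n_def by simp
    have "w!i = w'!p" using H n0 ri p unfolding m_def n_def by (metis add.right_neutral mod_less)
    then show ?thesis using a b wk rs by simp
  qed
  have ki: "k \<noteq> i"
  proof -
    have "i + 2 + t < 2 * m" using im mn tn by simp
    then show ?thesis using modl[of "i+2+t" m] im mn t2 unfolding k_def by auto
  qed
  have "{i, k} \<subseteq> RS w" using im km rk r unfolding RS_def retractable_segment_def m_def by auto
  then have "card {i, k} \<le> card (RS w)" using RS_finite card_mono by blast
  then show ?thesis using ki by simp
qed

lemma main_aux:
  assumes "one_step_retraction\<^sup>*\<^sup>* w []"
  shows "w \<noteq> [] \<Longrightarrow> card (RS w) \<ge> 2"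
  using assms
proof (induction rule: converse_rtranclp_induct)
  case base
  then show ?case by simp
next
  case (step y z)
  have ly: "length y \<ge> 2" using step.hyps(1) unfolding one_step_retraction_def by blast
  show ?case
  proof (cases "length y = 2")
    case True
    have "{0, 1} \<subseteq> RS y" using True unfolding RS_def retractable_segment_def by auto
    then have "card {0::nat, 1} \<le> card (RS y)" using RS_finite card_mono by blast
    then show ?thesis by simp
  next
    case False
    then have l3: "length y \<ge> 3" using ly by simp
    obtain i p where a: "retractable_segment y i" "length z = length y - 2" "p < length z"
      "\<forall>t < length z. z!((p+t) mod length z) = y!((i+2+t) mod length y)"
      using retr_char[OF step.hyps(1) l3] by blast
    have "z \<noteq> []" using a(2) l3 by auto
    then have "card (RS z) \<ge> 2" using step.IH by simp
    then show ?thesis using core[OF a] by simp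
  qed
qed

theorem mainTheorem13:
  fixes E :: "'a \<Rightarrow> 'a \<Rightarrow> bool" and W :: "'a list"
  assumes "simple_graph E"
    and "closed_walk E W"
    and "W \<noteq> []"
    and "null_homotopic W"
  shows "card {i. i < length W \<and> retractable_segment W i} \<ge> 2"
  using main_aux[OF assms(4)[unfolded null_homotopic_def] assms(3)] unfolding RS_def .

end
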